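(* Let $S$ be a finite set of states, $B\subseteq S$, $P_\pi$ the transition matrix of a finite Markov chain on $S$, and $0<\gamma_B<1$, $\gamma=1$. Let $\neg B_R$ be the set of states in rejecting bottom strongly connected components, $\neg B_{T,A}=S\setminus(B\cup\neg B_R)$, $X=B\cup\neg B_{T,A}$, $m=|B|$, $n'=|\neg B_{T,A}|$. Let $T$ be the restriction of $P_\pi$ to $X\times X$ (rows and columns ordered with $B$ first), and $$H=\begin{bmatrix}\gamma_B I_{m\times m}&\\&\gamma I_{n'\times n'}\end{bmatrix}T .$$ Let $(D_{(k)})_{k\ge0}$ be a sequence of vectors in $\mathbb{R}^{X}$ with $D_{(k+1)}=HD_{(k)}$ for all $k$ (e.g. the approximation error of dynamic-programming iterates for the surrogate reward restricted to $X$). Then there exist a constant $c\in(0,1)$ and a positive integer $N\le n'+1$ such that $\|D_{(k+N)}\|_\infty\le c\,\|D_{(k)}\|_\infty$ for all $k$.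
   Context: A strongly connected component (communicating class) of a finite Markov chain is a maximal set of mutually communicating states; a bottom strongly connected component (BSCC) is one with no outgoing transitions. A BSCC is rejecting if it contains no state of $B$, and accepting otherwise. *)

theory Defs
  imports Complex_Main
begin

definition markov_chain :: "'s set \<Rightarrow> ('s \<Rightarrow> 's \<Rightarrow> real) \<Rightarrow> bool" where
  "markov_chain S P \<longleftrightarrow> finite S \<and>
     (\<forall>s\<in>S. \<forall>t. P s t \<ge> 0) \<and>
     (\<forall>s\<in>S. \<forall>t. t \<notin> S \<longrightarrow> P s t = 0) \<and>
     (\<forall>s\<in>S. (\<Sum>t\<in>S. P s t) = 1)"

definition reach :: "'s set \<Rightarrow> ('s \<Rightarrow> 's \<Rightarrow> real) \<Rightarrow> ('s \<times> 's) set" where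
  "reach S P = {(s, t). s \<in> S \<and> t \<in> S \<and> P s t > 0}\<^sup>*"

definition communicate :: "'s set \<Rightarrow> ('s \<Rightarrow> 's \<Rightarrow> real) \<Rightarrow> 's \<Rightarrow> 's \<Rightarrow> bool" where
  "communicate S P s t \<longleftrightarrow> (s, t) \<in> reach S P \<and> (t, s) \<in> reach S P"

definition scc :: "'s set \<Rightarrow> ('s \<Rightarrow> 's \<Rightarrow> real) \<Rightarrow> 's set \<Rightarrow> bool" where
  "scc S P C \<longleftrightarrow> C \<noteq> {} \<and> C \<subseteq> S \<and>
     (\<forall>s\<in>C. \<forall>t\<in>C. communicate S P s t) \<and>
     (\<forall>s\<in>C. \<forall>t\<in>S. communicate S P s t \<longrightarrow> t \<in> C)"

definition bscc :: "'s set \<Rightarrow> ('s \<Rightarrow> 's \<Rightarrow> real) \<Rightarrow> 's set \<Rightarrow> bool" where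
  "bscc S P C \<longleftrightarrow> scc S P C \<and> (\<forall>s\<in>C. \<forall>t\<in>S. P s t > 0 \<longrightarrow> t \<in> C)"

definition rejecting_states :: "'s set \<Rightarrow> ('s \<Rightarrow> 's \<Rightarrow> real) \<Rightarrow> 's set \<Rightarrow> 's set" where
  "rejecting_states S P B = \<Union>{C. bscc S P C \<and> C \<inter> B = {}}"

definition H_op :: "'s set \<Rightarrow> ('s \<Rightarrow> 's \<Rightarrow> real) \<Rightarrow> 's set \<Rightarrow> real \<Rightarrow> real
                    \<Rightarrow> ('s \<Rightarrow> real) \<Rightarrow> 's \<Rightarrow> real" where
  "H_op X P B gB g v s = (if s \<in> B then gB else g) * (\<Sum>t\<in>X. P s t * v t)"

text \<open>Infinity norm of a vector indexed by the finite set X (0 if X is empty).\<close>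
definition inf_norm :: "'s set \<Rightarrow> ('s \<Rightarrow> real) \<Rightarrow> real" where
  "inf_norm X v = Max (insert 0 ((\<lambda>s. \<bar>v s\<bar>) ` X))"

end

theory Submission imports Defs begin

lemma reach_in_S:
  assumes "(x, y) \<in> reach S P" "x \<in> S" shows "y \<in> S"
  using assms(1) unfolding reach_def
  by (induction rule: rtrancl_induct) (auto simp: assms(2))

lemma reach_exit:
  assumes mc: "markov_chain S P" and s: "s \<in> S"
  shows "\<exists>t. (s, t) \<in> reach S P \<and> (t \<in> B \<or> t \<in> rejecting_states S P B)"
proof (rule ccontr)
  assume na: "\<not> ?thesis"
  define Rs where "Rs x = {y. (x, y) \<in> reach S P}" for x
  have fin: "finite S" using mc by (simp add: markov_chain_def)
  have RsS: "Rs x \<subseteq> S" if "x \<in> S" for x using reach_in_S[OF _ that] by (auto simp: Rs_def)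
  have trans: "(x, z) \<in> reach S P" if "(x, y) \<in> reach S P" "(y, z) \<in> reach S P" for x y z
    using that unfolding reach_def by auto
  have refl: "(x, x) \<in> reach S P" for x unfolding reach_def by auto
  obtain t where t: "t \<in> Rs s" and tmin: "\<forall>u. u \<in> Rs s \<longrightarrow> card (Rs t) \<le> card (Rs u)"
    using ex_has_least_nat[of "\<lambda>u. u \<in> Rs s" s "\<lambda>u. card (Rs u)"] refl unfolding Rs_def by blast
  have tS: "t \<in> S" using t RsS s by auto
  have tback: "(u, t) \<in> reach S P" if "u \<in> Rs t" for u
  proof -
    have uS: "u \<in> S" using that RsS tS by auto
    have sub: "Rs u \<subseteq> Rs t" using that trans by (auto simp: Rs_def)
    have "u \<in> Rs s" using that t trans by (auto simp: Rs_def)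
    hence "card (Rs t) \<le> card (Rs u)" using tmin by auto
    moreover have "card (Rs u) \<le> card (Rs t)"
      using card_mono[OF finite_subset[OF RsS[OF tS] fin] sub] .
    ultimately have "card (Rs u) = card (Rs t)" by simp
    hence "Rs u = Rs t" using card_subset_eq[OF finite_subset[OF RsS[OF tS] fin] sub] by simp
    thus ?thesis using refl unfolding Rs_def by blast
  qed
  have "bscc S P (Rs t)"
    unfolding bscc_def scc_def
  proof (intro conjI ballI impI)
    show "Rs t \<noteq> {}" using refl unfolding Rs_def by blast
    show "Rs t \<subseteq> S" using RsS tS .
    show "communicate S P x y" if "x \<in> Rs t" "y \<in> Rs t" for x y
      using that tback trans unfolding communicate_def Rs_def by blast
    show "y \<in> Rs t" if "x \<in> Rs t" "y \<in> S" "communicate S P x y" for x y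
      using that trans unfolding communicate_def Rs_def by blast
    show "y \<in> Rs t" if "x \<in> Rs t" "y \<in> S" "P x y > 0" for x y
    proof -
      have xS: "x \<in> S" using that RsS tS by auto
      have "(x, y) \<in> reach S P" using xS that unfolding reach_def by auto
      thus ?thesis using that trans unfolding Rs_def by blast
    qed
  qed
  moreover have "Rs t \<inter> B = {}"
    using na t trans unfolding Rs_def by blast
  ultimately have "Rs t \<subseteq> rejecting_states S P B" unfolding rejecting_states_def by auto
  hence "t \<in> rejecting_states S P B" using refl unfolding Rs_def by blast
  thus False using na t by (auto simp: Rs_def)
qed


primrec fseq :: "'s set \<Rightarrow> ('s \<Rightarrow> 's \<Rightarrow> real) \<Rightarrow> 's set \<Rightarrow> real \<Rightarrow> nat \<Rightarrow> 's \<Rightarrow> real" where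
  "fseq X P B gB 0 = (\<lambda>_. 1)"
| "fseq X P B gB (Suc k) = H_op X P B gB 1 (fseq X P B gB k)"

fun Gs :: "nat \<Rightarrow> 's set \<Rightarrow> 's set \<Rightarrow> ('s \<Rightarrow> 's \<Rightarrow> real) \<Rightarrow> 's set \<Rightarrow> 's set" where
  "Gs 0 S X P B = B \<union> {s\<in>X. \<exists>t\<in>S-X. P s t > 0}"
| "Gs (Suc j) S X P B = Gs 0 S X P B \<union> {s\<in>X. \<exists>t\<in>Gs j S X P B. P s t > 0}"

lemma edge_cross:
  assumes "(a, b) \<in> E\<^sup>*" "a \<notin> Q" "b \<in> Q"
  shows "\<exists>u v. (u, v) \<in> E \<and> u \<notin> Q \<and> v \<in> Q"
  using assms by (induction rule: converse_rtrancl_induct) blast+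

lemma sum_split:
  assumes mc: "markov_chain S P" and s: "s \<in> S" and XS: "X \<subseteq> S"
  shows "(\<Sum>t\<in>X. P s t) = 1 - (\<Sum>t\<in>S-X. P s t)"
proof -
  have "finite S" using mc by (simp add: markov_chain_def)
  hence "(\<Sum>t\<in>S. P s t) = (\<Sum>t\<in>X. P s t) + (\<Sum>t\<in>S-X. P s t)"
    using XS by (metis add.commute sum.subset_diff)
  thus ?thesis using mc s by (simp add: markov_chain_def)
qed

lemma fseq_bounds:
  assumes mc: "markov_chain S P" and XS: "X \<subseteq> S" and gB: "0 < gB" "gB < 1"
  shows "\<forall>s\<in>X. 0 \<le> fseq X P B gB k s \<and> fseq X P B gB k s \<le> 1"
proof (induction k)
  case 0 then show ?case by simp
next
  case (Suc k)
  show ?case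
  proof
    fix s assume sX: "s \<in> X"
    have sS: "s \<in> S" using sX XS by auto
    have nn: "\<And>t. 0 \<le> P s t" using mc sS by (simp add: markov_chain_def)
    have fin: "finite X" using mc XS finite_subset by (auto simp: markov_chain_def)
    have le: "(\<Sum>t\<in>X. P s t * fseq X P B gB k t) \<le> (\<Sum>t\<in>X. P s t)"
      by (rule sum_mono) (use Suc nn in \<open>auto intro: mult_left_le\<close>)
    have ge: "0 \<le> (\<Sum>t\<in>X. P s t * fseq X P B gB k t)"
      by (rule sum_nonneg) (use Suc nn in auto)
    have "(\<Sum>t\<in>S-X. P s t) \<ge> 0" by (rule sum_nonneg) (use nn in auto)
    hence one: "(\<Sum>t\<in>X. P s t) \<le> 1" using sum_split[OF mc sS XS] by simp
    let ?c = "(if s \<in> B then gB else 1)"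
    have c: "0 < ?c" "?c \<le> 1" using gB by auto
    have "?c * (\<Sum>t\<in>X. P s t * fseq X P B gB k t) \<le> 1"
      using le one c ge by (intro mult_le_one) auto
    moreover have "0 \<le> ?c * (\<Sum>t\<in>X. P s t * fseq X P B gB k t)" using c ge by simp
    ultimately show "0 \<le> fseq X P B gB (Suc k) s \<and> fseq X P B gB (Suc k) s \<le> 1"
      by (simp add: H_op_def)
  qed
qed

lemma step_lt:
  assumes mc: "markov_chain S P" and XS: "X \<subseteq> S" and gB: "0 < gB" "gB < 1"
    and sX: "s \<in> X" and bnd: "\<forall>s\<in>X. 0 \<le> F s \<and> F s \<le> 1"
    and cases: "s \<in> B \<or> (\<exists>t\<in>S-X. P s t > 0) \<or> (\<exists>t\<in>X. P s t > 0 \<and> F t < 1)"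
  shows "H_op X P B gB 1 F s < 1"
proof -
  have sS: "s \<in> S" using sX XS by auto
  have nn: "\<And>t. 0 \<le> P s t" using mc sS by (simp add: markov_chain_def)
  have fin: "finite X" using mc XS finite_subset by (auto simp: markov_chain_def)
  have finS: "finite S" using mc by (auto simp: markov_chain_def)
  have le: "(\<Sum>t\<in>X. P s t * F t) \<le> (\<Sum>t\<in>X. P s t)"
    by (rule sum_mono) (use bnd nn in \<open>auto intro: mult_left_le\<close>)
  have ge: "0 \<le> (\<Sum>t\<in>X. P s t * F t)"
    by (rule sum_nonneg) (use bnd nn in auto)
  have rest: "(\<Sum>t\<in>S-X. P s t) \<ge> 0" by (rule sum_nonneg) (use nn in auto)
  hence one: "(\<Sum>t\<in>X. P s t) \<le> 1" using sum_split[OF mc sS XS] by simp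
  show ?thesis
  proof (cases "s \<in> B")
    case True
    have "gB * (\<Sum>t\<in>X. P s t * F t) \<le> gB * 1"
      using le one gB by (intro mult_left_mono) auto
    hence "gB * (\<Sum>t\<in>X. P s t * F t) < 1" using gB by linarith
    thus ?thesis using True by (simp add: H_op_def)
  next
    case nB: False
    have "(\<Sum>t\<in>X. P s t * F t) < 1"
    proof (cases "\<exists>t\<in>S-X. P s t > 0")
      case True
      then obtain t where t: "t \<in> S - X" "P s t > 0" by auto
      have "P s t \<le> (\<Sum>t\<in>S-X. P s t)"
        using member_le_sum[of t "S - X" "P s"] t nn finS by auto
      thus ?thesis using le sum_split[OF mc sS XS] t by linarith
    next
      case False
      then obtain t where t: "t \<in> X" "P s t > 0" "F t < 1" using cases nB by auto
      have "(\<Sum>u\<in>X. P s u * F u) = P s t * F t + (\<Sum>u\<in>X-{t}. P s u * F u)"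
        using fin t(1) by (simp add: sum.remove)
      moreover have "(\<Sum>u\<in>X. P s u) = P s t + (\<Sum>u\<in>X-{t}. P s u)"
        using fin t(1) by (simp add: sum.remove)
      moreover have "(\<Sum>u\<in>X-{t}. P s u * F u) \<le> (\<Sum>u\<in>X-{t}. P s u)"
        by (rule sum_mono) (use bnd nn in \<open>auto intro: mult_left_le\<close>)
      moreover have "P s t * F t < P s t" using t mult_strict_left_mono[of "F t" 1 "P s t"] by simp
      ultimately show ?thesis using one by linarith
    qed
    thus ?thesis using nB by (simp add: H_op_def)
  qed
qed

lemma Gs_sub:
  assumes "B \<subseteq> X" shows "Gs j S X P B \<subseteq> X"
  using assms by (cases j) auto

lemma Gs0_sub: "Gs 0 S X P B \<subseteq> Gs j S X P B"
  by (cases j) auto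

lemma Gs_mono: "Gs j S X P B \<subseteq> Gs (Suc j) S X P B"
proof (induction j)
  case 0 then show ?case by simp
next
  case (Suc j) then show ?case by auto
qed

lemma Gs_key:
  assumes mc: "markov_chain S P" and XS: "X \<subseteq> S" and BX: "B \<subseteq> X" and gB: "0 < gB" "gB < 1"
  shows "\<forall>s\<in>Gs j S X P B. fseq X P B gB (Suc j) s < 1"
proof (induction j)
  case 0
  show ?case
  proof
    fix s assume "s \<in> Gs 0 S X P B"
    thus "fseq X P B gB (Suc 0) s < 1"
      using step_lt[OF mc XS gB, of s "fseq X P B gB 0"] BX by auto
  qed
next
  case (Suc j)
  show ?case
  proof
    fix s assume s: "s \<in> Gs (Suc j) S X P B"
    have sX: "s \<in> X" using Gs_sub[OF BX] s by blast
    have bnd: "\<forall>s\<in>X. 0 \<le> fseq X P B gB (Suc j) s \<and> fseq X P B gB (Suc j) s \<le> 1"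
      using fseq_bounds[OF mc XS gB] by blast
    have "s \<in> B \<or> (\<exists>t\<in>S-X. P s t > 0) \<or> (\<exists>t\<in>X. P s t > 0 \<and> fseq X P B gB (Suc j) t < 1)"
    proof (cases "s \<in> Gs 0 S X P B")
      case True thus ?thesis by auto
    next
      case False
      then obtain t where "t \<in> Gs j S X P B" "P s t > 0" using s by auto
      moreover have "t \<in> X" using Gs_sub[OF BX] calculation(1) by blast
      ultimately show ?thesis using Suc by blast
    qed
    thus "fseq X P B gB (Suc (Suc j)) s < 1"
      using step_lt[OF mc XS gB sX bnd] by simp
  qed
qed


lemma Gs_grow:
  assumes XS: "X \<subseteq> S" and BX: "B \<subseteq> X"
    and ex: "\<forall>s\<in>X. \<exists>t. (s, t) \<in> reach S P \<and> (t \<in> B \<or> t \<in> S - X)"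
    and sX: "s \<in> X" and sG: "s \<notin> Gs j S X P B"
  shows "\<exists>u\<in>X - Gs j S X P B. u \<in> Gs (Suc j) S X P B"
proof -
  define Q where "Q = Gs j S X P B \<union> (S - X)"
  obtain t where t: "(s, t) \<in> reach S P" "t \<in> B \<or> t \<in> S - X" using ex sX by blast
  have "B \<subseteq> Gs j S X P B" using Gs0_sub[of S X P B j] by auto
  hence tQ: "t \<in> Q" using t(2) unfolding Q_def by auto
  have sQ: "s \<notin> Q" using sX sG unfolding Q_def by auto
  obtain u v where uv: "(u, v) \<in> {(s, t). s \<in> S \<and> t \<in> S \<and> P s t > 0}" "u \<notin> Q" "v \<in> Q"
    using edge_cross[OF t(1)[unfolded reach_def] sQ tQ] by blast
  have uX: "u \<in> X - Gs j S X P B" using uv unfolding Q_def by auto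
  show ?thesis
  proof (cases "v \<in> Gs j S X P B")
    case True
    thus ?thesis using uX uv by (intro bexI[OF _ uX]) auto
  next
    case False
    hence "v \<in> S - X" using uv(3) unfolding Q_def by auto
    hence "u \<in> Gs 0 S X P B" using uX uv(1) by auto
    hence False using Gs0_sub[of S X P B j] uX by auto
    thus ?thesis ..
  qed
qed

lemma Gs_card:
  assumes fin: "finite X" and XS: "X \<subseteq> S" and BX: "B \<subseteq> X"
    and ex: "\<forall>s\<in>X. \<exists>t. (s, t) \<in> reach S P \<and> (t \<in> B \<or> t \<in> S - X)"
  shows "card (Gs j S X P B) \<ge> min (card X) (card B + j)"
proof (induction j)
  case 0
  have "card B \<le> card (Gs 0 S X P B)"
    by (rule card_mono) (use finite_subset[OF Gs_sub[OF BX, of 0 S P] fin] in auto)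
  thus ?case by simp
next
  case (Suc j)
  have finG: "finite (Gs (Suc j) S X P B)" using finite_subset[OF Gs_sub[OF BX] fin] .
  show ?case
  proof (cases "Gs j S X P B = X")
    case True
    hence "Gs (Suc j) S X P B = X" using Gs_mono[of j S X P B] Gs_sub[OF BX, of "Suc j" S P] by auto
    thus ?thesis by simp
  next
    case False
    then obtain s where "s \<in> X" "s \<notin> Gs j S X P B" using Gs_sub[OF BX, of j S P] by auto
    then obtain u where u: "u \<in> X - Gs j S X P B" "u \<in> Gs (Suc j) S X P B"
      using Gs_grow[OF XS BX ex] by blast
    have "Gs j S X P B \<subset> Gs (Suc j) S X P B" using Gs_mono[of j S X P B] u by auto
    hence "card (Gs j S X P B) < card (Gs (Suc j) S X P B)" using psubset_card_mono finG by blast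
    thus ?thesis using Suc by linarith
  qed
qed

lemma D_bound:
  assumes mc: "markov_chain S P" and XS: "X \<subseteq> S" and gB: "0 < gB" "gB < 1"
    and rec: "\<forall>k. \<forall>s\<in>X. D (Suc k) s = H_op X P B gB 1 (D k) s"
  shows "\<forall>s\<in>X. \<bar>D (k + j) s\<bar> \<le> inf_norm X (D k) * fseq X P B gB j s"
proof (induction j)
  case 0
  have fin: "finite X" using mc XS finite_subset by (auto simp: markov_chain_def)
  show ?case
  proof
    fix s assume "s \<in> X"
    thus "\<bar>D (k + 0) s\<bar> \<le> inf_norm X (D k) * fseq X P B gB 0 s"
      unfolding inf_norm_def using fin by (auto intro: Max_ge)
  qed
next
  case (Suc j)
  show ?case
  proof
    fix s assume sX: "s \<in> X"
    have sS: "s \<in> S" using sX XS by auto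
    have nn: "\<And>t. 0 \<le> P s t" using mc sS by (simp add: markov_chain_def)
    let ?c = "(if s \<in> B then gB else 1)"
    let ?M = "inf_norm X (D k)"
    have c: "0 < ?c" using gB by auto
    have "\<bar>\<Sum>t\<in>X. P s t * D (k + j) t\<bar> \<le> (\<Sum>t\<in>X. \<bar>P s t * D (k + j) t\<bar>)"
      by (rule sum_abs)
    also have "\<dots> \<le> (\<Sum>t\<in>X. P s t * (?M * fseq X P B gB j t))"
      by (rule sum_mono) (use Suc nn in \<open>auto simp: abs_mult intro: mult_left_mono\<close>)
    also have "\<dots> = ?M * (\<Sum>t\<in>X. P s t * fseq X P B gB j t)"
      by (simp add: sum_distrib_left algebra_simps)
    finally have h: "\<bar>\<Sum>t\<in>X. P s t * D (k + j) t\<bar> \<le> ?M * (\<Sum>t\<in>X. P s t * fseq X P B gB j t)" .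
    have "\<bar>D (k + Suc j) s\<bar> = ?c * \<bar>\<Sum>t\<in>X. P s t * D (k + j) t\<bar>"
      using rec sX c by (simp add: H_op_def abs_mult)
    also have "\<dots> \<le> ?c * (?M * (\<Sum>t\<in>X. P s t * fseq X P B gB j t))"
      using h c by (intro mult_left_mono) auto
    also have "\<dots> = ?M * fseq X P B gB (Suc j) s"
      by (simp add: H_op_def)
    finally show "\<bar>D (k + Suc j) s\<bar> \<le> ?M * fseq X P B gB (Suc j) s" .
  qed
qed


theorem lemma3:
  fixes S B :: "'s set" and P :: "'s \<Rightarrow> 's \<Rightarrow> real"
    and gB g :: real and D :: "nat \<Rightarrow> 's \<Rightarrow> real"
  assumes mc: "markov_chain S P"
    and BS: "B \<subseteq> S"
    and gB: "0 < gB" "gB < 1"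
    and g: "g = 1"
    and rec: "\<forall>k. \<forall>s \<in> S - rejecting_states S P B.
               D (Suc k) s = H_op (S - rejecting_states S P B) P B gB g (D k) s"
  shows "\<exists>c N. 0 < c \<and> c < 1 \<and> 0 < N \<and>
           N \<le> card (S - (B \<union> rejecting_states S P B)) + 1 \<and>
           (\<forall>k. inf_norm (S - rejecting_states S P B) (D (k + N))
                 \<le> c * inf_norm (S - rejecting_states S P B) (D k))"
proof -
  define R where "R = rejecting_states S P B"
  define X where "X = S - R"
  have finS: "finite S" using mc by (simp add: markov_chain_def)
  have XS: "X \<subseteq> S" unfolding X_def by auto
  have finX: "finite X" using finite_subset[OF XS finS] .
  have RS: "R \<subseteq> S" unfolding R_def rejecting_states_def bscc_def scc_def by auto
  have BR: "B \<inter> R = {}" unfolding R_def rejecting_states_def by auto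
  have BX: "B \<subseteq> X" using BS BR unfolding X_def by auto
  have ex: "\<forall>s\<in>X. \<exists>t. (s, t) \<in> reach S P \<and> (t \<in> B \<or> t \<in> S - X)"
  proof
    fix s assume sX: "s \<in> X"
    hence sS: "s \<in> S" using XS by auto
    obtain t where t: "(s, t) \<in> reach S P" "t \<in> B \<or> t \<in> R"
      using reach_exit[OF mc sS, of B] unfolding R_def by blast
    have "t \<in> S" using reach_in_S[OF t(1) sS] .
    thus "\<exists>t. (s, t) \<in> reach S P \<and> (t \<in> B \<or> t \<in> S - X)"
      using t unfolding X_def by blast
  qed
  define n where "n = card (S - (B \<union> R))"
  have "S - (B \<union> R) = X - B" unfolding X_def by auto
  hence n: "n = card X - card B" unfolding n_def using card_Diff_subset[OF finite_subset[OF BX finX] BX] by simp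
  have cBX: "card B \<le> card X" using card_mono[OF finX BX] .
  have "card (Gs n S X P B) \<ge> min (card X) (card B + n)" using Gs_card[OF finX XS BX ex] .
  hence "card (Gs n S X P B) \<ge> card X" using n cBX by simp
  hence GX: "Gs n S X P B = X"
    using card_seteq[OF finX Gs_sub[OF BX, of n S P]] by simp
  define N where "N = Suc n"
  define F where "F = fseq X P B gB N"
  have Flt: "\<forall>s\<in>X. F s < 1" using Gs_key[OF mc XS BX gB, of n] GX unfolding F_def N_def by simp
  define c where "c = Max (insert (1/2) (F ` X))"
  have c0: "c \<ge> 1/2" unfolding c_def using finX by (intro Max_ge) auto
  have c1: "c < 1" unfolding c_def using finX Flt by (auto simp: Max_less_iff)
  have Fc: "\<forall>s\<in>X. F s \<le> c" unfolding c_def using finX by auto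
  have recX: "\<forall>k. \<forall>s\<in>X. D (Suc k) s = H_op X P B gB 1 (D k) s"
    using rec g unfolding X_def R_def by simp
  have main: "inf_norm X (D (k + N)) \<le> c * inf_norm X (D k)" for k
  proof -
    let ?M = "inf_norm X (D k)"
    have M0: "0 \<le> ?M" unfolding inf_norm_def using finX by (auto intro: Max_ge)
    have "\<forall>s\<in>X. \<bar>D (k + N) s\<bar> \<le> ?M * F s"
      using D_bound[OF mc XS gB recX, of k N] unfolding F_def by simp
    hence "\<forall>s\<in>X. \<bar>D (k + N) s\<bar> \<le> c * ?M"
      using Fc M0 by (metis mult.commute mult_left_mono order_trans)
    moreover have "0 \<le> c * ?M" using c0 M0 by simp
    ultimately show ?thesis unfolding inf_norm_def using finX by (auto simp: Max_le_iff)
  qed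
  show ?thesis
    using c0 c1 main unfolding N_def n_def X_def R_def
    by (intro exI[of _ c] exI[of _ "Suc n"]) (auto simp: n_def R_def)
qed

end
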